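(* For any tree $T$ with at least four vertices, $\mu(T)\le\mu'(T)$, with equality only when $T$ is the path $P_4$ on four vertices.
   Context: A leaf is a vertex of degree at most 1. $\mathcal{S}(T)$ is the set of nonempty subsets of $V(T)$ inducing a connected subgraph (subtrees), and $\mu(T)$ is the average cardinality of a set in $\mathcal{S}(T)$. $\mathcal{S}'(T)$ is obtained from $\mathcal{S}(T)$ by adding the empty set and removing the singleton $\{v\}$ for every leaf $v$ (other singletons remain). $\mu'(T)$ is the average cardinality of a set in $\mathcal{S}'(T)$ (the empty set counting with cardinality 0). *)

theory Defs
  imports Complex_Main
begin

definition simple_graph :: "'a set \<Rightarrow> ('a \<Rightarrow> 'a \<Rightarrow> bool) \<Rightarrow> bool" where
  "simple_graph V E \<longleftrightarrow> finite V \<and> (\<forall>x y. E x y \<longrightarrow> x \<in> V \<and> y \<in> V \<and> x \<noteq> y \<and> E y x)"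

definition induces_connected :: "('a \<Rightarrow> 'a \<Rightarrow> bool) \<Rightarrow> 'a set \<Rightarrow> bool" where
  "induces_connected E S \<longleftrightarrow>
     (\<forall>x\<in>S. \<forall>y\<in>S. (\<lambda>u v. u \<in> S \<and> v \<in> S \<and> E u v)\<^sup>*\<^sup>* x y)"

definition edges :: "'a set \<Rightarrow> ('a \<Rightarrow> 'a \<Rightarrow> bool) \<Rightarrow> 'a set set" where
  "edges V E = {{x, y} | x y. x \<in> V \<and> y \<in> V \<and> E x y}"

definition is_tree :: "'a set \<Rightarrow> ('a \<Rightarrow> 'a \<Rightarrow> bool) \<Rightarrow> bool" where
  "is_tree V E \<longleftrightarrow> simple_graph V E \<and> V \<noteq> {} \<and> induces_connected E V
     \<and> card (edges V E) + 1 = card V"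

definition degree :: "'a set \<Rightarrow> ('a \<Rightarrow> 'a \<Rightarrow> bool) \<Rightarrow> 'a \<Rightarrow> nat" where
  "degree V E v = card {u \<in> V. E v u}"

definition is_leaf :: "'a set \<Rightarrow> ('a \<Rightarrow> 'a \<Rightarrow> bool) \<Rightarrow> 'a \<Rightarrow> bool" where
  "is_leaf V E v \<longleftrightarrow> v \<in> V \<and> degree V E v \<le> 1"

definition subtrees :: "'a set \<Rightarrow> ('a \<Rightarrow> 'a \<Rightarrow> bool) \<Rightarrow> 'a set set" where
  "subtrees V E = {S. S \<subseteq> V \<and> S \<noteq> {} \<and> induces_connected E S}"

definition subtrees' :: "'a set \<Rightarrow> ('a \<Rightarrow> 'a \<Rightarrow> bool) \<Rightarrow> 'a set set" where
  "subtrees' V E = insert {} (subtrees V E - {{v} | v. is_leaf V E v})"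

definition avg_card :: "'a set set \<Rightarrow> real" where
  "avg_card F = (\<Sum>S\<in>F. real (card S)) / real (card F)"

definition mu :: "'a set \<Rightarrow> ('a \<Rightarrow> 'a \<Rightarrow> bool) \<Rightarrow> real" where
  "mu V E = avg_card (subtrees V E)"

definition mu' :: "'a set \<Rightarrow> ('a \<Rightarrow> 'a \<Rightarrow> bool) \<Rightarrow> real" where
  "mu' V E = avg_card (subtrees' V E)"

definition is_P4 :: "'a set \<Rightarrow> ('a \<Rightarrow> 'a \<Rightarrow> bool) \<Rightarrow> bool" where
  "is_P4 V E \<longleftrightarrow> (\<exists>f. bij_betw f {0::nat..<4} V \<and>
     (\<forall>i<4. \<forall>j<4. E (f i) (f j) \<longleftrightarrow> (i = j + 1 \<or> j = i + 1)))"

end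

theory Submission imports Defs begin
lemma handshake:
  assumes sg: "simple_graph V E"
  shows "(\<Sum>v\<in>V. degree V E v) = 2 * card (edges V E)"
proof -
  have fin: "finite V" using sg simple_graph_def by auto
  define A where "A = Sigma V (\<lambda>x. {y\<in>V. E x y})"
  have finA: "finite A" unfolding A_def using fin by auto
  have c1: "card A = (\<Sum>v\<in>V. degree V E v)" unfolding A_def degree_def using fin by simp
  define F where "F e = {p\<in>A. {fst p, snd p} = e}" for e
  have finE: "finite (edges V E)"
  proof -
    have "edges V E \<subseteq> (\<lambda>(x,y). {x,y}) ` (V \<times> V)" unfolding edges_def by auto
    thus ?thesis using fin by (meson finite_SigmaI finite_imageI finite_subset)
  qed
  have AU: "A = (\<Union>e\<in>edges V E. F e)"
  proof
    show "A \<subseteq> (\<Union>e\<in>edges V E. F e)"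
    proof
      fix p assume p: "p \<in> A"
      then obtain x y where "p = (x,y)" "x \<in> V" "y \<in> V" "E x y" unfolding A_def by auto
      hence "{x,y} \<in> edges V E" "p \<in> F {x,y}" using p unfolding edges_def F_def by auto
      thus "p \<in> (\<Union>e\<in>edges V E. F e)" by blast
    qed
  qed (auto simp: F_def)
  have "card A = (\<Sum>e\<in>edges V E. card (F e))"
    unfolding AU
    apply (rule card_UN_disjoint[OF finE])
    using finA F_def by auto
  also have "\<dots> = (\<Sum>e\<in>edges V E. 2)"
  proof (rule sum.cong[OF refl])
    fix e assume "e \<in> edges V E"
    then obtain x y where e: "e = {x,y}" "x \<in> V" "y \<in> V" "E x y" unfolding edges_def by auto
    have xy: "x \<noteq> y" "E y x" using e sg unfolding simple_graph_def by auto
    have "F e = {(x,y),(y,x)}"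
      unfolding F_def A_def using e xy by (auto simp: doubleton_eq_iff)
    thus "card (F e) = 2" using xy by simp
  qed
  finally show ?thesis using c1 by simp
qed

lemma two_leaves:
  assumes t: "is_tree V E" and n: "card V \<ge> 2"
  shows "\<exists>a b. a \<noteq> b \<and> is_leaf V E a \<and> is_leaf V E b"
proof -
  have sg: "simple_graph V E" and conn: "induces_connected E V"
    and ec: "card (edges V E) + 1 = card V" using t is_tree_def by auto
  have fin: "finite V" using sg simple_graph_def by auto
  have deg1: "degree V E x \<ge> 1" if x: "x \<in> V" for x
  proof -
    obtain y where y: "y \<in> V" "y \<noteq> x"
    proof -
      have "\<not> card V \<le> Suc 0" using n by simp
      then show ?thesis using that x fin card_le_Suc0_iff_eq by metis
    qed
    have "(\<lambda>u v. u \<in> V \<and> v \<in> V \<and> E u v)\<^sup>*\<^sup>* x y" using conn x y unfolding induces_connected_def by auto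
    then obtain z where "z \<in> V" "E x z" using y(2)
      by (metis (no_types, lifting) converse_rtranclpE)
    hence "z \<in> {u\<in>V. E x u}" by simp
    moreover have "finite {u\<in>V. E x u}" using fin by simp
    ultimately show ?thesis unfolding degree_def
      by (metis One_nat_def Suc_leI card_gt_0_iff empty_iff)
  qed
  define L where "L = {v\<in>V. degree V E v \<le> 1}"
  have finL: "finite L" "L \<subseteq> V" using fin L_def by auto
  have "(\<Sum>v\<in>V. degree V E v) = (\<Sum>v\<in>L. degree V E v) + (\<Sum>v\<in>V-L. degree V E v)"
    using finL fin by (metis sum.subset_diff add.commute)
  moreover have "(\<Sum>v\<in>L. degree V E v) \<ge> (\<Sum>v\<in>L. 1)"
    by (rule sum_mono) (use deg1 finL in auto)
  moreover have "(\<Sum>v\<in>V-L. degree V E v) \<ge> (\<Sum>v\<in>V-L. 2)"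
    by (rule sum_mono) (auto simp: L_def)
  ultimately have "2 * card (edges V E) \<ge> card L + 2 * card (V - L)"
    using handshake[OF sg] by simp
  moreover have "card (V - L) = card V - card L" using finL card_Diff_subset by blast
  moreover have "card L \<le> card V" using finL fin card_mono by blast
  ultimately have "card L \<ge> 2" using ec by linarith
  hence "\<not> card L \<le> Suc 0" by simp
  then obtain a b where "a \<in> L" "b \<in> L" "a \<noteq> b" using card_le_Suc0_iff_eq[OF finL(1)] by blast
  thus ?thesis unfolding L_def is_leaf_def by blast
qed

lemma remove_leaf_connected:
  assumes sg: "simple_graph V E" and conn: "induces_connected E V" and leaf: "is_leaf V E v"
  shows "induces_connected E (V - {v})"
proof -
  have fin: "finite V" using sg simple_graph_def by auto
  have uniq: "w1 = w2" if "E v w1" "E v w2" for w1 w2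
  proof -
    have "w1 \<in> {u\<in>V. E v u}" "w2 \<in> {u\<in>V. E v u}" using that sg unfolding simple_graph_def by auto
    moreover have "card {u\<in>V. E v u} \<le> Suc 0" using leaf unfolding is_leaf_def degree_def by simp
    ultimately show ?thesis using card_le_Suc0_iff_eq[of "{u\<in>V. E v u}"] fin by auto
  qed
  let ?R = "\<lambda>u w. u \<in> V \<and> w \<in> V \<and> E u w"
  let ?R' = "\<lambda>u w. u \<in> V - {v} \<and> w \<in> V - {v} \<and> E u w"
  show ?thesis unfolding induces_connected_def
  proof (intro ballI)
    fix x y assume x: "x \<in> V - {v}" and y: "y \<in> V - {v}"
    have r: "?R\<^sup>*\<^sup>* x y" using conn x y unfolding induces_connected_def by auto
    have "(z \<noteq> v \<longrightarrow> ?R'\<^sup>*\<^sup>* x z) \<and> (z = v \<longrightarrow> (\<forall>w. E v w \<longrightarrow> ?R'\<^sup>*\<^sup>* x w))"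
      if "?R\<^sup>*\<^sup>* x z" for z
      using that
    proof (induction rule: rtranclp_induct)
      case base
      then show ?case using x by auto
    next
      case (step y z)
      show ?case
      proof (cases "y = v")
        case True
        then show ?thesis using step sg unfolding simple_graph_def by auto
      next
        case False
        hence ry: "?R'\<^sup>*\<^sup>* x y" using step by auto
        show ?thesis
        proof (cases "z = v")
          case True
          have "E v y" using step True sg unfolding simple_graph_def by auto
          then show ?thesis using True ry uniq by auto
        next
          case False
          have "?R' y z" using step False \<open>y \<noteq> v\<close> by auto
          then show ?thesis using ry False rtranclp.rtrancl_into_rtrancl[of ?R' x y z] by blast
        qed
      qed
    qed
    then show "?R'\<^sup>*\<^sup>* x y" using r y by auto
  qed
qed

lemma all4: "(\<forall>i<(4::nat). P i) \<longleftrightarrow> P 0 \<and> P 1 \<and> P 2 \<and> P 3"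
  by (auto simp: eval_nat_numeral less_Suc_eq)

lemma P4_path:
  assumes dist: "distinct [a,b,c,d]"
    and tab: "\<And>x y. x \<in> {a,b,c,d} \<Longrightarrow> y \<in> {a,b,c,d} \<Longrightarrow>
        E x y \<longleftrightarrow> ({x,y} = {a,b} \<or> {x,y} = {b,c} \<or> {x,y} = {c,d})"
  shows "is_P4 {a,b,c,d} E"
proof -
  define f where "f i = [a,b,c,d] ! i" for i
  have s4: "{0..<4::nat} = {0,1,2,3}" by auto
  have img: "f ` {0..<4} = {a,b,c,d}" unfolding s4 f_def by simp
  have inj: "inj_on f {0..<4}" using dist unfolding s4 f_def by auto
  have ab: "E a b" "E b a" "E b c" "E c b" "E c d" "E d c" using tab by auto
  have nab: "\<not> E a a" "\<not> E b b" "\<not> E c c" "\<not> E d d" "\<not> E a c" "\<not> E c a" "\<not> E a d" "\<not> E d a"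
     "\<not> E b d" "\<not> E d b"
    using tab[of a a] tab[of b b] tab[of c c] tab[of d d] tab[of a c] tab[of c a] tab[of a d] tab[of d a]
      tab[of b d] tab[of d b] dist by (auto simp: doubleton_eq_iff)
  have "\<forall>i<4. \<forall>j<4. E (f i) (f j) \<longleftrightarrow> (i = j + 1 \<or> j = i + 1)"
    unfolding all4 f_def by (simp add: ab nab)
  then show ?thesis unfolding is_P4_def using img inj bij_betw_def by blast
qed

lemma P4_lemma:
  assumes sg: "simple_graph V E" and V: "V = {a,b,c,d}" and dist: "distinct [a,b,c,d]"
    and la: "\<And>x y. E a x \<Longrightarrow> E a y \<Longrightarrow> x = y"
    and lb: "\<And>x y. E b x \<Longrightarrow> E b y \<Longrightarrow> x = y"
    and nc: "\<exists>y z. y \<noteq> z \<and> E c y \<and> E c z"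
    and nd: "\<exists>y z. y \<noteq> z \<and> E d y \<and> E d z"
  shows "is_P4 V E"
proof -
  have memb: "x \<in> {a,b,c,d} \<and> y \<in> {a,b,c,d} \<and> x \<noteq> y" if "E x y" for x y
    using sg that V unfolding simple_graph_def by blast
  have sy: "E x y \<longleftrightarrow> E y x" for x y using sg unfolding simple_graph_def by blast
  have A1: "\<not> (E a b \<and> E a c)" "\<not> (E a b \<and> E a d)" "\<not> (E a c \<and> E a d)"
    using la[of b c] la[of b d] la[of c d] dist by auto
  have A2: "\<not> (E b a \<and> E b c)" "\<not> (E b a \<and> E b d)" "\<not> (E b c \<and> E b d)"
    using lb[of a c] lb[of a d] lb[of c d] dist by auto
  have C1: "(E c a \<and> E c b) \<or> (E c a \<and> E c d) \<or> (E c b \<and> E c d)"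
  proof -
    obtain y z where yz: "y \<noteq> z" "E c y" "E c z" using nc by blast
    have "y \<in> {a,b,d}" "z \<in> {a,b,d}" using memb[OF yz(2)] memb[OF yz(3)] by auto
    thus ?thesis using yz by auto
  qed
  have D1: "(E d a \<and> E d b) \<or> (E d a \<and> E d c) \<or> (E d b \<and> E d c)"
  proof -
    obtain y z where yz: "y \<noteq> z" "E d y" "E d z" using nd by blast
    have "y \<in> {a,b,c}" "z \<in> {a,b,c}" using memb[OF yz(2)] memb[OF yz(3)] by auto
    thus ?thesis using yz by auto
  qed
  have s: "E c a = E a c" "E c b = E b c" "E d a = E a d" "E d b = E b d" "E d c = E c d" "E b a = E a b"
    using sy by blast+
  have cases: "(E a c \<and> E c d \<and> E b d \<and> \<not> E a b \<and> \<not> E a d \<and> \<not> E b c)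
            \<or> (E a d \<and> E c d \<and> E b c \<and> \<not> E a b \<and> \<not> E a c \<and> \<not> E b d)"
    using A1 A2 C1 D1 unfolding s by blast
  have irr: "\<not> E x x" for x using sg unfolding simple_graph_def by blast
  show ?thesis
  proof (cases "E a c \<and> E c d \<and> E b d \<and> \<not> E a b \<and> \<not> E a d \<and> \<not> E b c")
    case True
    have V': "V = {a,c,d,b}" using V by auto
    have "is_P4 {a,c,d,b} E"
    proof (rule P4_path)
      show "distinct [a,c,d,b]" using dist by auto
      fix x y assume "x \<in> {a,c,d,b}" "y \<in> {a,c,d,b}"
      thus "E x y \<longleftrightarrow> ({x,y} = {a,c} \<or> {x,y} = {c,d} \<or> {x,y} = {d,b})"
        using True dist irr s by (auto simp: doubleton_eq_iff)
    qed
    thus ?thesis using V' by simp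
  next
    case False
    hence T: "E a d \<and> E c d \<and> E b c \<and> \<not> E a b \<and> \<not> E a c \<and> \<not> E b d" using cases by blast
    have V': "V = {a,d,c,b}" using V by auto
    have "is_P4 {a,d,c,b} E"
    proof (rule P4_path)
      show "distinct [a,d,c,b]" using dist by auto
      fix x y assume "x \<in> {a,d,c,b}" "y \<in> {a,d,c,b}"
      thus "E x y \<longleftrightarrow> ({x,y} = {a,d} \<or> {x,y} = {d,c} \<or> {x,y} = {c,b})"
        using T dist irr s by (auto simp: doubleton_eq_iff)
    qed
    thus ?thesis using V' by simp
  qed
qed

theorem mainTheorem6:
  fixes V :: "'a set" and E :: "'a \<Rightarrow> 'a \<Rightarrow> bool"
  assumes "is_tree V E" and "card V \<ge> 4"
  shows "mu V E \<le> mu' V E \<and> (mu V E = mu' V E \<longrightarrow> is_P4 V E)"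
proof -
  have sg: "simple_graph V E" and conn: "induces_connected E V" and Vne: "V \<noteq> {}"
    using assms(1) unfolding is_tree_def by auto
  have fin: "finite V" using sg unfolding simple_graph_def by auto
  define n where "n = card V"
  have n4: "n \<ge> 4" using assms(2) n_def by simp
  obtain a b where ab: "a \<noteq> b" "is_leaf V E a" "is_leaf V E b"
    using two_leaves[OF assms(1)] assms(2) by fastforce
  have aV: "a \<in> V" and bV: "b \<in> V" using ab unfolding is_leaf_def by auto
  define sub where "sub = subtrees V E"
  define LS where "LS = {{v}|v. is_leaf V E v}"
  have subPow: "sub \<subseteq> Pow V" unfolding sub_def subtrees_def by auto
  have finsub: "finite sub" using subPow fin by (meson finite_Pow_iff finite_subset)
  have single: "{v} \<in> sub" if "v \<in> V" for v
    unfolding sub_def subtrees_def induces_connected_def using that by auto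
  have LSsub: "LS \<subseteq> sub" unfolding LS_def is_leaf_def using single by auto
  have finLS: "finite LS" using LSsub finsub finite_subset by blast
  have abLS: "{{a},{b}} \<subseteq> LS" unfolding LS_def using ab by auto
  define l where "l = card LS"
  have l2: "l \<ge> 2"
  proof -
    have "card {{a},{b}} = 2" using ab(1) by simp
    thus ?thesis unfolding l_def using card_mono[OF finLS abLS] by simp
  qed
  define N where "N = card sub"
  define W where "W = (\<Sum>S\<in>sub. real (card S))"
  have Nl: "N \<ge> l" unfolding N_def l_def using card_mono[OF finsub LSsub] .
  have cardS: "finite S" if "S \<in> sub" for S using that subPow fin finite_subset by blast
  have Vsub: "V \<in> sub" unfolding sub_def subtrees_def using conn Vne by auto
  have Vasub: "V - {a} \<in> sub"
  proof -
    have "V - {a} \<noteq> {}" using ab bV by auto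
    thus ?thesis unfolding sub_def subtrees_def using remove_leaf_connected[OF sg conn ab(2)] by auto
  qed
  have Vbsub: "V - {b} \<in> sub"
  proof -
    have "V - {b} \<noteq> {}" using ab aV by auto
    thus ?thesis unfolding sub_def subtrees_def using remove_leaf_connected[OF sg conn ab(3)] by auto
  qed
  define B where "B = {V, V - {a}, V - {b}}"
  have Bsub: "B \<subseteq> sub" using Vsub Vasub Vbsub B_def by auto
  have cVa: "card (V - {a}) = n - 1" "card (V - {b}) = n - 1" using aV bV fin n_def by auto
  have sumB: "(\<Sum>S\<in>B. real (card S) - 2) = (real n - 2) + 2 * (real n - 3)"
  proof -
    have d1: "V \<noteq> V - {a}" "V \<noteq> V - {b}" "V - {a} \<noteq> V - {b}" using aV bV ab(1) by auto
    have "(\<Sum>S\<in>B. real (card S) - 2) = (real (card V) - 2) + (real (card (V-{a})) - 2) + (real (card (V-{b})) - 2)"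
      unfolding B_def using d1 by simp
    thus ?thesis using cVa n_def n4 by (simp add: of_nat_diff)
  qed
  have rest: "(\<Sum>S\<in>sub - B. real (card S) - 2) \<ge> - real n"
  proof -
    have c1: "(\<Sum>S\<in>sub - B. real (card S) - 2) \<ge> (\<Sum>S\<in>sub - B. - (if card S = 1 then 1 else 0))"
    proof (rule sum_mono)
      fix S assume S: "S \<in> sub - B"
      have "S \<noteq> {}" "finite S" using S cardS unfolding sub_def subtrees_def by auto
      hence "card S \<ge> 1" by (simp add: Suc_leI card_gt_0_iff)
      thus "- (if card S = 1 then 1 else 0) \<le> real (card S) - 2" by auto
    qed
    have c2: "(\<Sum>S\<in>sub - B. - (if card S = 1 then 1 else 0)) = - real (card ((sub - B) \<inter> {S. card S = 1}))"
      using finsub by (simp add: sum.If_cases sum_negf)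
    have c3: "card ((sub - B) \<inter> {S. card S = 1}) \<le> card ((\<lambda>v. {v}) ` V)"
    proof (rule card_mono)
      show "finite ((\<lambda>v. {v}) ` V)" using fin by simp
      show "(sub - B) \<inter> {S. card S = 1} \<subseteq> (\<lambda>v. {v}) ` V"
        using subPow by (auto simp: card_1_singleton_iff)
    qed
    have c4: "card ((\<lambda>v. {v}) ` V) \<le> n" unfolding n_def by (rule card_image_le[OF fin])
    have "real (card ((sub - B) \<inter> {S. card S = 1})) \<le> real n" using c3 c4 by linarith
    thus ?thesis using c1 c2 by linarith
  qed
  have D: "W - 2 * real N \<ge> 2 * real n - 8"
  proof -
    have "W - 2 * real N = (\<Sum>S\<in>sub. real (card S) - 2)"
      unfolding W_def N_def by (simp add: sum_subtractf)
    also have "\<dots> = (\<Sum>S\<in>B. real (card S) - 2) + (\<Sum>S\<in>sub - B. real (card S) - 2)"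
      using sum.subset_diff[OF Bsub finsub, of "\<lambda>S. real (card S) - 2"] by simp
    finally have "W - 2 * real N = (real n - 2 + 2 * (real n - 3)) + (\<Sum>S\<in>sub - B. real (card S) - 2)"
      by (simp only: sumB)
    thus ?thesis using rest by (smt (verit))
  qed
  have mu: "mu V E = W / real N" unfolding mu_def avg_card_def W_def N_def sub_def by simp
  have sub': "subtrees' V E = insert {} (sub - LS)" unfolding subtrees'_def sub_def LS_def by simp
  have emp: "{} \<notin> sub - LS" unfolding sub_def subtrees_def by auto
  have finD: "finite (sub - LS)" using finsub by simp
  have cN': "card (subtrees' V E) = N - l + 1"
    unfolding sub' using emp finD card_Diff_subset[OF finLS LSsub] N_def l_def by simp
  have sLS: "(\<Sum>S\<in>LS. real (card S)) = real l"
  proof -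
    have "(\<Sum>S\<in>LS. real (card S)) = (\<Sum>S\<in>LS. 1)" by (rule sum.cong) (auto simp: LS_def)
    thus ?thesis unfolding l_def by simp
  qed
  have W': "(\<Sum>S\<in>subtrees' V E. real (card S)) = W - real l"
  proof -
    have "(\<Sum>S\<in>subtrees' V E. real (card S)) = (\<Sum>S\<in>sub - LS. real (card S))"
      unfolding sub' using emp finD by simp
    also have "\<dots> = W - (\<Sum>S\<in>LS. real (card S))"
      unfolding W_def using sum.subset_diff[OF LSsub finsub, of "\<lambda>S. real (card S)"] by simp
    finally show ?thesis using sLS by simp
  qed
  have mu': "mu' V E = (W - real l) / (real N - real l + 1)"
    unfolding mu'_def avg_card_def W' cN' using Nl by (simp add: of_nat_diff)
  have Npos: "real N > 0" using Nl l2 by simp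
  have den: "real N - real l + 1 > 0" using Nl by simp
  define Dv where "Dv = W - 2 * real N"
  have Dv0: "Dv \<ge> 0" using D n4 Dv_def by simp
  have key: "mu' V E - mu V E = (real N * (real l - 2) + Dv * (real l - 1)) / (real N * (real N - real l + 1))"
    unfolding mu mu' Dv_def using Npos den by (simp add: field_simps)
  have num: "real N * (real l - 2) + Dv * (real l - 1) \<ge> 0" using l2 Dv0 Npos
    by (simp add: mult_nonneg_nonneg)
  have ineq: "mu V E \<le> mu' V E" using key num Npos den
    by (metis diff_ge_0_iff_ge divide_nonneg_pos mult_pos_pos)
  moreover have "is_P4 V E" if eq: "mu V E = mu' V E"
  proof -
    have "real N * (real l - 2) + Dv * (real l - 1) = 0" using key eq Npos den by simp
    moreover have "real N * (real l - 2) \<ge> 0" "Dv * (real l - 1) \<ge> 0" using l2 Dv0 Npos by simp_all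
    ultimately have z: "real N * (real l - 2) = 0" "Dv * (real l - 1) = 0" by linarith+
    hence l2': "l = 2" using Npos l2 by simp
    hence "Dv = 0" using z by simp
    hence nn: "n = 4" using D Dv_def n4 by simp
    have LSe: "LS = {{a},{b}}"
      using card_subset_eq[OF finLS abLS] l2' ab(1) l_def by simp
    have "card (V - {a,b}) = 2" using nn n_def aV bV ab(1) fin by (simp add: card_Diff_subset)
    then obtain c d where cd: "V - {a,b} = {c,d}" "c \<noteq> d" by (auto simp: card_2_iff)
    have V4: "V = {a,b,c,d}" using cd aV bV by auto
    have dist: "distinct [a,b,c,d]" using cd ab(1) by auto
    have degle: "\<And>x y. E v x \<Longrightarrow> E v y \<Longrightarrow> x = y" if "is_leaf V E v" for v
    proof -
      fix x y assume "E v x" "E v y"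
      hence "x \<in> {u\<in>V. E v u}" "y \<in> {u\<in>V. E v u}" using sg unfolding simple_graph_def by auto
      moreover have "card {u\<in>V. E v u} \<le> Suc 0" using that unfolding is_leaf_def degree_def by simp
      ultimately show "x = y" using card_le_Suc0_iff_eq[of "{u\<in>V. E v u}"] fin by auto
    qed
    have nonleaf: "\<exists>y z. y \<noteq> z \<and> E v y \<and> E v z" if "v \<in> V" "v \<notin> {a,b}" for v
    proof -
      have "\<not> is_leaf V E v"
      proof
        assume "is_leaf V E v"
        hence "{v} \<in> LS" unfolding LS_def by auto
        thus False using LSe that by auto
      qed
      hence "\<not> card {u\<in>V. E v u} \<le> Suc 0" using that unfolding is_leaf_def degree_def by simp
      then obtain y z where "y \<in> {u\<in>V. E v u}" "z \<in> {u\<in>V. E v u}" "y \<noteq> z"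
        using card_le_Suc0_iff_eq[of "{u\<in>V. E v u}"] fin by auto
      thus ?thesis by auto
    qed
    show ?thesis
      apply (rule P4_lemma[OF sg V4 dist degle[OF ab(2)] degle[OF ab(3)]])
      using nonleaf cd dist V4 by auto
  qed
  ultimately show ?thesis by blast
qed

end
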